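(* In the monoid $M$ defined below, the set $I=C\cup D\cup E\cup\{0\}$, where $C=\{a^pc_i:p,i\in\mathbb{Z}\}$, $D=\{a^pd:p\in\mathbb{Z}\}$, $E=\{a^pe:p\in\mathbb{Z}\}$, is an rf-compatible ideal of $M$, and $N=(M\setminus I)\cup\{0\}=\{a^p\}\cup\{a^pb_i\}\cup\{0\}$ is a submonoid of $M$.
   Context: Let $\tau:\mathbb{Z}\setminus\{0\}\to\mathbb{Z}$, $\tau(2^k(2r+1))=\frac{2}{3}(2^{2\lceil k/2\rceil}-1)$ ($k,r\in\mathbb{Z}$, $k\ge0$). Let $M$ be the commutative monoid with zero $0$ given by generators $a,a^{-1},b_i,c_i$ ($i\in\mathbb{Z}$), $d,e$ and relations $aa^{-1}=a^{-1}a=1$; $b_ic_j=d$ if $i=j$ and $b_ic_j=a^{\tau(j-i)}e$ if $i\neq j$; and $b_ib_j=b_id=b_ie=c_jc_k=c_jd=c_je=dd=de=ee=0$ for all $i,j,k\in\mathbb{Z}$. Its elements have distinct normal forms $a^p$, $a^pb_i$, $a^pc_i$, $a^pd$, $a^pe$ ($p,i\in\mathbb{Z}$) and $0$. An ideal $I$ of a monoid $M$ is rf-compatible with $M$ if for any two distinct $s,t\in I$ there is a congruence $\rho$ of finite index on $I$ with $s/\rho\neq t/\rho$ such that $\rho\cup\Delta_M$ is a congruence on $M$, where $\Delta_M=\{(x,x):x\in M\}$. *)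

theory Defs
  imports "HOL-Computational_Algebra.Primes"
begin

text \<open>tau(2^k(2r+1)) = (2/3)(2^(2 ceil(k/2)) - 1); k is the 2-adic valuation.
  The value at 0 is irrelevant (only tau(j-i) with i ~= j is used).\<close>
definition tau :: "int \<Rightarrow> int" where
  "tau n = (let k = multiplicity (2::int) n in 2 * (2 ^ (2 * ((k + 1) div 2)) - 1) div 3)"

text \<open>Elements of M via their normal forms:
  Apow p = a^p, Bel p i = a^p b_i, Cel p i = a^p c_i, Del p = a^p d, Eel p = a^p e, Zero = 0.\<close>
datatype melem = Apow int | Bel int int | Cel int int | Del int | Eel int | Zero

fun mmul :: "melem \<Rightarrow> melem \<Rightarrow> melem" where
  "mmul Zero y = Zero"
| "mmul x Zero = Zero"
| "mmul (Apow p) (Apow q) = Apow (p + q)"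
| "mmul (Apow p) (Bel q i) = Bel (p + q) i"
| "mmul (Apow p) (Cel q i) = Cel (p + q) i"
| "mmul (Apow p) (Del q) = Del (p + q)"
| "mmul (Apow p) (Eel q) = Eel (p + q)"
| "mmul (Bel q i) (Apow p) = Bel (p + q) i"
| "mmul (Cel q i) (Apow p) = Cel (p + q) i"
| "mmul (Del q) (Apow p) = Del (p + q)"
| "mmul (Eel q) (Apow p) = Eel (p + q)"
| "mmul (Bel p i) (Cel q j) = (if i = j then Del (p + q) else Eel (p + q + tau (j - i)))"
| "mmul (Cel q j) (Bel p i) = (if i = j then Del (p + q) else Eel (p + q + tau (j - i)))"
| "mmul x y = Zero"

definition mone :: melem where "mone = Apow 0"

definition Cset :: "melem set" where "Cset = {Cel p i | p i. True}"
definition Dset :: "melem set" where "Dset = {Del p | p. True}"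
definition Eset :: "melem set" where "Eset = {Eel p | p. True}"
definition Iset :: "melem set" where "Iset = Cset \<union> Dset \<union> Eset \<union> {Zero}"
definition Nset :: "melem set" where "Nset = (UNIV - Iset) \<union> {Zero}"

definition is_ideal :: "('a \<Rightarrow> 'a \<Rightarrow> 'a) \<Rightarrow> 'a set \<Rightarrow> bool" where
  "is_ideal mul I \<longleftrightarrow> I \<noteq> {} \<and> (\<forall>x\<in>I. \<forall>m. mul m x \<in> I \<and> mul x m \<in> I)"

definition is_congruence_on :: "('a \<Rightarrow> 'a \<Rightarrow> 'a) \<Rightarrow> 'a set \<Rightarrow> ('a \<times> 'a) set \<Rightarrow> bool" where
  "is_congruence_on mul S \<rho> \<longleftrightarrow> equiv S \<rho> \<and>
     (\<forall>x y u v. (x, y) \<in> \<rho> \<longrightarrow> (u, v) \<in> \<rho> \<longrightarrow> (mul x u, mul y v) \<in> \<rho>)"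

definition rf_compatible :: "('a \<Rightarrow> 'a \<Rightarrow> 'a) \<Rightarrow> 'a set \<Rightarrow> bool" where
  "rf_compatible mul I \<longleftrightarrow>
     (\<forall>s\<in>I. \<forall>t\<in>I. s \<noteq> t \<longrightarrow>
        (\<exists>\<rho>. is_congruence_on mul I \<rho> \<and> finite (I // \<rho>) \<and> (s, t) \<notin> \<rho> \<and>
              is_congruence_on mul UNIV (\<rho> \<union> Id)))"

definition is_submonoid :: "('a \<Rightarrow> 'a \<Rightarrow> 'a) \<Rightarrow> 'a \<Rightarrow> 'a set \<Rightarrow> bool" where
  "is_submonoid mul one N \<longleftrightarrow> one \<in> N \<and> (\<forall>x\<in>N. \<forall>y\<in>N. mul x y \<in> N)"

end

theory Submission imports Defs begin

lemma three_dvd: "(3::int) dvd 4^c - 1"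
proof (induction c)
  case (Suc c)
  have "(4::int)^Suc c - 1 = 4*(4^c - 1) + 3" by simp
  with Suc show ?case by presburger
qed simp

lemma tau3: "3 * tau x = 2 * 2 ^ (2 * ((multiplicity 2 x + 1) div 2)) - 2"
proof -
  define c where "c = (multiplicity (2::int) x + 1) div 2"
  have e: "(2::int) ^ (2*c) = 4^c" by (simp add: power_mult)
  obtain r where r: "4^c - 1 = 3 * (r::int)" using three_dvd[of c] by blast
  have "tau x = 2 * r" unfolding tau_def Let_def c_def[symmetric] e r by simp
  thus ?thesis unfolding c_def[symmetric] e using r by simp
qed

lemma T1:
  assumes "x \<noteq> 0" "(2::int)^n dvd x"
  shows "(2::int)^n dvd 3 * tau x + 2"
proof -
  have "multiplicity 2 x \<ge> n" using multiplicity_geI[OF assms(1) _ assms(2)] by simp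
  hence le: "n \<le> 2 * ((multiplicity 2 x + 1) div 2) + 1" by linarith
  have "(2::int)^n dvd 2 ^ (2 * ((multiplicity 2 x + 1) div 2) + 1)"
    using le by (rule le_imp_power_dvd)
  thus ?thesis unfolding tau3 by simp
qed


lemma dvd_sub_swap: "(d::int) dvd x - y \<Longrightarrow> d dvd y \<Longrightarrow> d dvd x"
proof -
  assume "d dvd x - y" "d dvd y"
  hence "d dvd (x - y) + y" by (rule dvd_add)
  thus ?thesis by simp
qed

lemma dvd_sub_swap2: "(d::int) dvd x - y \<Longrightarrow> d dvd x \<Longrightarrow> d dvd y"
  using dvd_diff[of d x "x - y"] by simp

lemma T2:
  assumes "x \<noteq> 0" "y \<noteq> 0" "(2::int)^n dvd x - y"
  shows "(2::int)^n dvd 3 * tau x - 3 * tau y"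
proof (cases "n \<le> multiplicity 2 x")
  case True
  hence dx: "(2::int)^n dvd x" by (rule multiplicity_dvd')
  hence dy: "(2::int)^n dvd y" using assms(3) dvd_sub_swap2 by blast
  have "(2::int)^n dvd (3 * tau x + 2) - (3 * tau y + 2)"
    using T1[OF assms(1) dx] T1[OF assms(2) dy] by (rule dvd_diff)
  thus ?thesis by simp
next
  case False
  have ny: "\<not> n \<le> multiplicity 2 y"
  proof
    assume "n \<le> multiplicity 2 y"
    hence dy: "(2::int)^n dvd y" by (rule multiplicity_dvd')
    hence "(2::int)^n dvd x" using assms(3) dvd_sub_swap by blast
    thus False using False multiplicity_geI[OF assms(1), of 2 n] by simp
  qed
  have a: "multiplicity 2 x \<le> multiplicity 2 y" if "x \<noteq> 0" "y \<noteq> 0" "(2::int)^n dvd x - y"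
     "\<not> n \<le> multiplicity 2 x" for x y :: int
  proof -
    have "(2::int) ^ multiplicity 2 x dvd 2^n" using that(4) by (intro le_imp_power_dvd) simp
    hence "(2::int) ^ multiplicity 2 x dvd x - y" using that(3) by (rule dvd_trans)
    hence "(2::int) ^ multiplicity 2 x dvd y" using multiplicity_dvd[of 2 x] dvd_sub_swap2 by blast
    thus ?thesis using multiplicity_geI[OF that(2), of 2] by simp
  qed
  have "(2::int)^n dvd -(x - y)" using assms(3) by (simp only: dvd_minus_iff)
  hence "(2::int)^n dvd y - x" by simp
  hence "multiplicity 2 x = multiplicity 2 y" using a[OF assms(1,2,3) False] a[OF assms(2,1) _ ny] by simp
  thus ?thesis unfolding tau3 by simp
qed


datatype key = KC int int | KE int | KZ | KO melem

fun fk :: "nat \<Rightarrow> melem \<Rightarrow> key" where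
  "fk n (Cel p i) = KC (p mod 2^n) (i mod 2^n)"
| "fk n (Del p) = KE ((3*p - 2) mod 2^n)"
| "fk n (Eel q) = KE ((3*q) mod 2^n)"
| "fk n Zero = KZ"
| "fk n (Apow p) = KO (Apow p)"
| "fk n (Bel p i) = KO (Bel p i)"

fun isI :: "melem \<Rightarrow> bool" where
  "isI (Cel p i) = True" | "isI (Del p) = True" | "isI (Eel p) = True" | "isI Zero = True"
| "isI (Apow p) = False" | "isI (Bel p i) = False"

lemma Iset_eq: "Iset = {x. isI x}"
  unfolding Iset_def Cset_def Dset_def Eset_def
  by (auto elim: isI.elims)

lemma mmul_comm: "mmul x y = mmul y x"
  by (cases x; cases y) auto

lemma me: "((a::int) mod 2^n = b mod 2^n) = (2^n dvd a - b)"
  by (rule mod_eq_dvd_iff)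

lemma cb:
  assumes "p mod 2^n = p' mod 2^n" "i mod 2^n = i' mod 2^n"
  shows "fk n (mmul (Cel p i) (Bel q k)) = fk n (mmul (Cel p' i') (Bel q k))"
proof -
  let ?N = "(2::int)^n"
  have dp: "?N dvd p - p'" and di: "?N dvd i - i'" using assms by (simp_all add: me)
  have dp3: "?N dvd 3 * (p - p')" using dp by (rule dvd_mult)
  show ?thesis
  proof (cases "i = k")
    case ik: True
    show ?thesis
    proof (cases "i' = k")
      case True
      have "?N dvd (3*(q+p) - 2) - (3*(q+p') - 2)" using dp3 by (simp add: algebra_simps)
      thus ?thesis using ik True by (simp add: me)
    next
      case False
      have "?N dvd i' - k" using di ik dvd_minus_iff by fastforce
      hence t: "?N dvd 3 * tau (i' - k) + 2" using False by (intro T1) auto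
      have "?N dvd 3 * (p - p') - (3 * tau (i' - k) + 2)" using dp3 t by (rule dvd_diff)
      hence "?N dvd (3*(q+p) - 2) - 3*(q+p'+tau (i'-k))" by (simp add: algebra_simps)
      thus ?thesis using ik False by (simp add: me)
    qed
  next
    case ik: False
    show ?thesis
    proof (cases "i' = k")
      case True
      have "?N dvd i - k" using di True by simp
      hence t: "?N dvd 3 * tau (i - k) + 2" using ik by (intro T1) auto
      have "?N dvd 3 * (p - p') + (3 * tau (i - k) + 2)" using dp3 t by (rule dvd_add)
      hence "?N dvd 3*(q+p+tau (i-k)) - (3*(q+p') - 2)" by (simp add: algebra_simps)
      thus ?thesis using ik True by (simp add: me)
    next
      case False
      have "?N dvd (i - k) - (i' - k)" using di by simp
      hence t: "?N dvd 3 * tau (i - k) - 3 * tau (i' - k)" using ik False by (intro T2) auto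
      have "?N dvd 3 * (p - p') + (3 * tau (i - k) - 3 * tau (i' - k))" using dp3 t by (rule dvd_add)
      hence "?N dvd 3*(q+p+tau (i-k)) - 3*(q+p'+tau (i'-k))" by (simp add: algebra_simps)
      thus ?thesis using ik False by (simp add: me)
    qed
  qed
qed

lemma shift3: "(3*p - 2) mod 2^n = (3*p' - 2) mod (2::int)^n \<Longrightarrow> (3*(q+p) - 2) mod 2^n = (3*(q+p') - 2) mod (2::int)^n"
proof -
  assume h: "(3*p - 2) mod 2^n = (3*p' - 2) mod (2::int)^n"
  have e: "(3*(q+p) - 2) - (3*(q+p') - 2) = (3*p - 2) - (3*p' - 2)" by algebra
  show ?thesis using h unfolding me e .
qed

lemma shift3b: "(3*p - 2) mod 2^n = (3*p') mod (2::int)^n \<Longrightarrow> (3*(q+p) - 2) mod 2^n = (3*(q+p')) mod (2::int)^n"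
proof -
  assume h: "(3*p - 2) mod 2^n = (3*p') mod (2::int)^n"
  have e: "(3*(q+p) - 2) - (3*(q+p')) = (3*p - 2) - (3*p')" by algebra
  show ?thesis using h unfolding me e .
qed

lemma shift3c: "(3*p) mod 2^n = (3*p') mod (2::int)^n \<Longrightarrow> (3*(q+p)) mod 2^n = (3*(q+p')) mod (2::int)^n"
proof -
  assume h: "(3*p) mod 2^n = (3*p') mod (2::int)^n"
  have e: "(3*(q+p)) - (3*(q+p')) = (3*p) - (3*p')" by algebra
  show ?thesis using h unfolding me e .
qed

lemma shift1: "(p) mod 2^n = (p') mod (2::int)^n \<Longrightarrow> (q+p) mod 2^n = (q+p') mod (2::int)^n"
proof -
  assume h: "(p) mod 2^n = (p') mod (2::int)^n"
  have e: "(q+p) - (q+p') = (p) - (p')" by algebra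
  show ?thesis using h unfolding me e .
qed

lemma compat: "fk n x = fk n y \<Longrightarrow> fk n (mmul x m) = fk n (mmul y m)"
proof (cases x)
  case (Cel p i)
  assume h: "fk n x = fk n y"
  then obtain p' i' where y: "y = Cel p' i'" "p mod 2^n = p' mod 2^n" "i mod 2^n = i' mod 2^n"
    using Cel by (cases y) auto
  show ?thesis
  proof (cases m)
    case (Bel q k) thus ?thesis using cb[OF y(2,3)] Cel y by simp
  next
    case (Apow q) thus ?thesis using Cel y shift1[OF y(2)] by simp
  qed (use Cel y in simp_all)
next
  case (Del p)
  assume h: "fk n x = fk n y"
  show ?thesis
  proof (cases y)
    case (Del p')
    hence h': "(3*p - 2) mod 2^n = (3*p' - 2) mod (2::int)^n" using h \<open>x = Del p\<close> by simp
    show ?thesis using \<open>x = Del p\<close> Del shift3[OF h'] by (cases m) simp_all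
  next
    case (Eel p')
    hence h': "(3*p - 2) mod 2^n = (3*p') mod (2::int)^n" using h \<open>x = Del p\<close> by simp
    show ?thesis using \<open>x = Del p\<close> Eel shift3b[OF h'] by (cases m) simp_all
  qed (use h Del in simp_all)
next
  case (Eel p)
  assume h: "fk n x = fk n y"
  show ?thesis
  proof (cases y)
    case (Del p')
    hence h': "(3*p' - 2) mod 2^n = (3*p) mod (2::int)^n" using h \<open>x = Eel p\<close> by simp
    show ?thesis using \<open>x = Eel p\<close> Del shift3b[OF h'] by (cases m) simp_all
  next
    case (Eel p')
    hence h': "(3*p) mod 2^n = (3*p') mod (2::int)^n" using h \<open>x = Eel p\<close> by simp
    show ?thesis using \<open>x = Eel p\<close> Eel shift3c[OF h'] by (cases m) simp_all
  qed (use h Eel in simp_all)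
next
  case Zero
  assume h: "fk n x = fk n y"
  thus ?thesis using Zero by (cases y) simp_all
next
  case (Apow p)
  assume h: "fk n x = fk n y"
  thus ?thesis using Apow by (cases y) simp_all
next
  case (Bel p i)
  assume h: "fk n x = fk n y"
  thus ?thesis using Bel by (cases y) simp_all
qed


lemma ideal_mul: "isI x \<Longrightarrow> isI (mmul x m)"
  by (cases x; cases m) auto

lemma KO_inv: "fk n y = KO x \<Longrightarrow> y = x"
  by (cases y) auto

lemma fk_I: "isI x \<Longrightarrow> fk n x \<noteq> KO z"
  by (cases x) auto

definition R :: "nat \<Rightarrow> (melem \<times> melem) set" where
  "R n = {(x,y). fk n x = fk n y}"

definition rho :: "nat \<Rightarrow> (melem \<times> melem) set" where
  "rho n = {(x,y). x \<in> Iset \<and> y \<in> Iset \<and> fk n x = fk n y}"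

lemma rho_mem: "(x,y) \<in> rho n \<longleftrightarrow> x \<in> Iset \<and> y \<in> Iset \<and> fk n x = fk n y"
  unfolding rho_def by simp

lemma rho_Id: "rho n \<union> Id = R n"
proof
  show "rho n \<union> Id \<subseteq> R n" unfolding rho_def R_def by auto
next
  show "R n \<subseteq> rho n \<union> Id"
  proof
    fix z assume "z \<in> R n"
    then obtain x y where z: "z = (x,y)" and e: "fk n x = fk n y" unfolding R_def by auto
    show "z \<in> rho n \<union> Id"
    proof (cases "isI x")
      case True
      have "isI y"
      proof (rule ccontr)
        assume "\<not> isI y"
        hence "fk n y = KO y" by (cases y) auto
        thus False using fk_I[OF True] e by simp
      qed
      thus ?thesis using True e z unfolding rho_def Iset_eq by auto
    next
      case False
      hence "fk n x = KO x" by (cases x) auto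
      hence "y = x" using e KO_inv by simp
      thus ?thesis using z by simp
    qed
  qed
qed

lemma compat2: "fk n x = fk n y \<Longrightarrow> fk n u = fk n v \<Longrightarrow> fk n (mmul x u) = fk n (mmul y v)"
proof -
  assume a: "fk n x = fk n y" "fk n u = fk n v"
  have "fk n (mmul x u) = fk n (mmul y u)" using compat[OF a(1)] .
  also have "\<dots> = fk n (mmul u y)" by (simp add: mmul_comm)
  also have "\<dots> = fk n (mmul v y)" using compat[OF a(2)] .
  also have "\<dots> = fk n (mmul y v)" by (simp add: mmul_comm)
  finally show ?thesis .
qed

lemma congR: "is_congruence_on mmul UNIV (R n)"
  unfolding is_congruence_on_def
proof (intro conjI allI impI)
  have m: "(x,y) \<in> R n \<longleftrightarrow> fk n x = fk n y" for x y unfolding R_def by simp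
  show "equiv UNIV (R n)"
    unfolding equiv_def
  proof (intro conjI)
    show "R n \<subseteq> UNIV \<times> UNIV" by simp
    show "refl_on UNIV (R n)" unfolding refl_on_def m by blast
    show "sym (R n)" unfolding sym_def m by metis
    show "trans (R n)" unfolding trans_def m by metis
  qed
  fix x y u v assume "(x, y) \<in> R n" "(u, v) \<in> R n"
  thus "(mmul x u, mmul y v) \<in> R n" unfolding m by (rule compat2)
qed

lemma congrho: "is_congruence_on mmul Iset (rho n)"
  unfolding is_congruence_on_def
proof (intro conjI allI impI)
  show "equiv Iset (rho n)"
    unfolding equiv_def
  proof (intro conjI)
    show "rho n \<subseteq> Iset \<times> Iset" unfolding rho_def by auto
    show "refl_on Iset (rho n)" unfolding refl_on_def rho_mem by blast
    show "sym (rho n)" unfolding sym_def rho_mem by metis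
    show "trans (rho n)" unfolding trans_def rho_mem by metis
  qed
  fix x y u v assume "(x, y) \<in> rho n" "(u, v) \<in> rho n"
  hence a: "isI x" "isI y" "isI u" "isI v" "fk n x = fk n y" "fk n u = fk n v"
    unfolding rho_def Iset_eq by auto
  show "(mmul x u, mmul y v) \<in> rho n"
    unfolding rho_def Iset_eq using ideal_mul[OF a(1)] ideal_mul[OF a(2)] compat2[OF a(5,6)] by simp
qed

lemma mod_bound: "(a::int) mod 2^n \<in> {0..<2^n}"
  by simp

lemma fin_keys: "finite (fk n ` Iset)"
proof -
  let ?S = "{0..<(2::int)^n}"
  have "fk n ` Iset \<subseteq> (\<lambda>(a,b). KC a b) ` (?S \<times> ?S) \<union> KE ` ?S \<union> {KZ}"
  proof
    fix k assume "k \<in> fk n ` Iset"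
    then obtain x where x: "isI x" "k = fk n x" unfolding Iset_eq by auto
    show "k \<in> (\<lambda>(a,b). KC a b) ` (?S \<times> ?S) \<union> KE ` ?S \<union> {KZ}"
      using x mod_bound by (cases x) (auto simp del: atLeastLessThan_iff)
  qed
  moreover have "finite ((\<lambda>(a,b). KC a b) ` (?S \<times> ?S) \<union> KE ` ?S \<union> {KZ})" by simp
  ultimately show ?thesis by (rule finite_subset)
qed

lemma fin_quot: "finite (Iset // rho n)"
proof -
  have "Iset // rho n \<subseteq> (\<lambda>k. {y \<in> Iset. fk n y = k}) ` (fk n ` Iset)"
  proof
    fix c assume "c \<in> Iset // rho n"
    then obtain x where x: "x \<in> Iset" "c = rho n `` {x}" unfolding quotient_def by auto
    hence "c = {y \<in> Iset. fk n y = fk n x}" unfolding rho_def by auto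
    thus "c \<in> (\<lambda>k. {y \<in> Iset. fk n y = k}) ` (fk n ` Iset)" using x by auto
  qed
  thus ?thesis using fin_keys by (rule finite_subset[OF _ finite_imageI])
qed

lemma mod_sep: "(x::int) \<noteq> y \<Longrightarrow> \<bar>x\<bar> + \<bar>y\<bar> < 2^n \<Longrightarrow> x mod 2^n \<noteq> y mod 2^n"
proof
  assume a: "x \<noteq> y" "\<bar>x\<bar> + \<bar>y\<bar> < 2^n" "x mod 2^n = y mod 2^n"
  hence "(2::int)^n dvd x - y" by (simp add: me)
  hence "\<bar>(2::int)^n\<bar> \<le> \<bar>x - y\<bar>" using a(1) by (intro dvd_imp_le_int) auto
  thus False using a(2) by simp
qed

fun hs :: "melem \<Rightarrow> int" where
  "hs (Cel p i) = \<bar>p\<bar> + \<bar>i\<bar>" | "hs (Del p) = 3*\<bar>p\<bar> + 2" | "hs (Eel p) = 3*\<bar>p\<bar>"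
| "hs _ = 0"

lemma ex_big: "\<exists>n. (B::int) < 2^n"
proof -
  have a0: "int (nat B) < int (2 ^ nat B)" using less_exp[of "nat B"] by (simp only: of_nat_less_iff)
  have a: "int (nat B) < 2 ^ nat B" using a0 by simp
  have b: "B \<le> int (nat B)" by simp
  from a b have "B < 2 ^ nat B" by linarith
  thus ?thesis by blast
qed

lemma sep:
  assumes "isI s" "isI t" "s \<noteq> t" "hs s + hs t < 2^n"
  shows "fk n s \<noteq> fk n t"
proof -
  have hpos: "hs x \<ge> 0" for x by (cases x) auto
  show ?thesis
  proof (cases s)
    case (Cel p i)
    show ?thesis
    proof (cases t)
      case (Cel p' i')
      have "p \<noteq> p' \<or> i \<noteq> i'" using assms(3) \<open>s = Cel p i\<close> Cel by auto
      thus ?thesis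
      proof
        assume "p \<noteq> p'"
        moreover have "\<bar>p\<bar> + \<bar>p'\<bar> < 2^n" using assms(4) \<open>s = Cel p i\<close> Cel by simp
        ultimately show ?thesis using mod_sep \<open>s = Cel p i\<close> Cel by simp
      next
        assume "i \<noteq> i'"
        moreover have "\<bar>i\<bar> + \<bar>i'\<bar> < 2^n" using assms(4) \<open>s = Cel p i\<close> Cel by simp
        ultimately show ?thesis using mod_sep \<open>s = Cel p i\<close> Cel by simp
      qed
    qed (use Cel in auto)
  next
    case (Del p)
    show ?thesis
    proof (cases t)
      case (Del p')
      have "3*p - 2 \<noteq> 3*p' - 2" using assms(3) \<open>s = Del p\<close> Del by auto
      moreover have "\<bar>3*p-2\<bar> + \<bar>3*p'-2\<bar> < 2^n" using assms(4) \<open>s = Del p\<close> Del by simp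
      ultimately show ?thesis using mod_sep \<open>s = Del p\<close> Del by simp
    next
      case (Eel p')
      have "3*p - 2 \<noteq> 3*p'" by presburger
      moreover have "\<bar>3*p-2\<bar> + \<bar>3*p'\<bar> < 2^n" using assms(4) \<open>s = Del p\<close> Eel by simp
      ultimately show ?thesis using mod_sep \<open>s = Del p\<close> Eel by simp
    qed (use Del in auto)
  next
    case (Eel p)
    show ?thesis
    proof (cases t)
      case (Del p')
      have "3*p' - 2 \<noteq> 3*p" by presburger
      moreover have "\<bar>3*p'-2\<bar> + \<bar>3*p\<bar> < 2^n" using assms(4) \<open>s = Eel p\<close> Del by simp
      ultimately show ?thesis using mod_sep \<open>s = Eel p\<close> Del by (metis fk.simps(2,3) key.inject(2))
    next
      case (Eel p')
      have "3*p \<noteq> 3*p'" using assms(3) \<open>s = Eel p\<close> Eel by auto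
      moreover have "\<bar>3*p\<bar> + \<bar>3*p'\<bar> < 2^n" using assms(4) \<open>s = Eel p\<close> Eel by simp
      ultimately show ?thesis using mod_sep \<open>s = Eel p\<close> Eel by simp
    qed (use Eel in auto)
  next
    case (Bel p i) thus ?thesis using assms by simp
  next
    case Zero thus ?thesis using assms by (cases t) auto
  next
    case (Apow p) thus ?thesis using assms by simp
  qed
qed

theorem mainTheorem16:
  shows "is_ideal mmul Iset \<and> rf_compatible mmul Iset \<and> is_submonoid mmul mone Nset"
proof (intro conjI)
  show "is_ideal mmul Iset"
    unfolding is_ideal_def Iset_eq
  proof (intro conjI ballI allI)
    show "{x. isI x} \<noteq> {}" by (metis empty_Collect_eq isI.simps(4))
    fix x m assume "x \<in> {x. isI x}"
    hence "isI x" by simp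
    thus "mmul m x \<in> {x. isI x}" "mmul x m \<in> {x. isI x}"
      using ideal_mul[of x m] mmul_comm[of m x] by simp_all
  qed
  show "is_submonoid mmul mone Nset"
  proof -
    have N: "x \<in> Nset \<longleftrightarrow> x = Zero \<or> \<not> isI x" for x unfolding Nset_def Iset_eq by auto
    have m: "\<not> isI x \<Longrightarrow> \<not> isI y \<Longrightarrow> mmul x y = Zero \<or> \<not> isI (mmul x y)" for x y
      by (cases x; cases y) auto
    have z: "mmul x Zero = Zero" for x by (cases x) auto
    show ?thesis unfolding is_submonoid_def mone_def
    proof (intro conjI ballI)
      show "Apow 0 \<in> Nset" using N by simp
      fix x y assume xy: "x \<in> Nset" "y \<in> Nset"
      show "mmul x y \<in> Nset"
      proof (cases "x = Zero \<or> y = Zero")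
        case True thus ?thesis using z N by auto
      next
        case False
        hence "\<not> isI x" "\<not> isI y" using xy N by auto
        thus ?thesis using m N by simp
      qed
    qed
  qed
  show "rf_compatible mmul Iset"
    unfolding rf_compatible_def
  proof (intro ballI impI)
    fix s t assume st: "s \<in> Iset" "t \<in> Iset" "s \<noteq> t"
    obtain n where n: "hs s + hs t < 2^n" using ex_big by blast
    have "fk n s \<noteq> fk n t" using sep st n unfolding Iset_eq by auto
    hence "(s,t) \<notin> rho n" unfolding rho_def by auto
    thus "\<exists>\<rho>. is_congruence_on mmul Iset \<rho> \<and> finite (Iset // \<rho>) \<and> (s, t) \<notin> \<rho> \<and>
              is_congruence_on mmul UNIV (\<rho> \<union> Id)"
      using congrho[of n] fin_quot[of n] congR[of n] unfolding rho_Id[symmetric]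
      by (intro exI[of _ "rho n"]) simp
  qed
qed

end
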